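(* Let $X$ be a nonempty set, $S$ a semigroup and $\phi':X\to E(S)$ a one-to-one mapping. If $\phi'$ induces a unique skeleton $A$ of $S$, then $\langle A\rangle$ is the smallest regular subsemigroup of $S$ containing $X\phi'$. In particular, if moreover $\langle A\rangle=S$, then $S$ is regular and has no proper regular subsemigroup containing $X\phi'$ (i.e. $(S,\phi')$ is weakly idempotent generated by $X$).
   Context: Let $1$ be a symbol not in $X$. Elements of height $\ge 2$ are triples $g=(g^l,g^c,g^r)$; $\Gamma_0(X)=\{1\}$, $\Gamma_1(X)=X$, each $x\in X$ identified with $(1,x,1)$; for $i\ge 2$, $\Gamma_i(X)$ is the set of triples $g\in\Gamma_{i-1}(X)\times\Gamma_{i-2}(X)\times\Gamma_{i-1}(X)$ with $g^l\neq g^r$ and $g^c\in\{(g^l)^l,(g^l)^r\}\cap\{(g^r)^l,(g^r)^r\}$; $\Gamma(X)=\bigcup_{i\ge0}\Gamma_i(X)$. $S^1$ is $S$ with an identity adjoined if necessary; $E(\cdot)$ is the set of idempotents. For idempotents $e,f$ of a semigroup $R$, $S(e,f)=\{h\in E(R): fh=h=he,\ ehf=ef\}$. A skeleton mapping is a mapping $\phi:\Gamma(X)\to E(S^1)$ such that (i) $\phi|_X$ is one-to-one with $X\phi\subseteq E(S)$; (ii) $(1\phi)(g\phi)=g\phi=(g\phi)(1\phi)$ for all $g\in X$; (iii) $g\phi\in S\big((g^r\phi)(g^c\phi),(g^c\phi)(g^l\phi)\big)$ (in $S^1$) for all $g\in\Gamma_i(X)$, $i\ge2$. A skeleton of $S$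 induced by $\phi'$ is a set $(\Gamma(X)\setminus\{1\})\phi$ where $\phi$ is a skeleton mapping with $\phi|_X=\phi'$; "$\phi'$ induces a unique skeleton $A$" means $A$ is the only such set. *)

theory Defs
  imports Main
begin

text \<open>Elements of Gamma(X): the symbol 1 (One), generators x (Gen x), and triples
  (Tri l c r) = (g^l, g^c, g^r).\<close>
datatype 'a gam = One | Gen 'a | Tri "'a gam" "'a gam" "'a gam"

text \<open>Components; each x is identified with the triple (1, x, 1).\<close>
fun lft :: "'a gam \<Rightarrow> 'a gam" where
  "lft One = One" | "lft (Gen x) = One" | "lft (Tri l c r) = l"
fun cen :: "'a gam \<Rightarrow> 'a gam" where
  "cen One = One" | "cen (Gen x) = Gen x" | "cen (Tri l c r) = c"
fun rgt :: "'a gam \<Rightarrow> 'a gam" where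
  "rgt One = One" | "rgt (Gen x) = One" | "rgt (Tri l c r) = r"

fun Gam :: "'a set \<Rightarrow> nat \<Rightarrow> 'a gam set" where
  "Gam X 0 = {One}"
| "Gam X (Suc 0) = Gen ` X"
| "Gam X (Suc (Suc i)) =
     {Tri l c r | l c r. l \<in> Gam X (Suc i) \<and> c \<in> Gam X i \<and> r \<in> Gam X (Suc i) \<and> l \<noteq> r
        \<and> c \<in> {lft l, rgt l} \<inter> {lft r, rgt r}}"

definition GamAll :: "'a set \<Rightarrow> 'a gam set" where
  "GamAll X = (\<Union>i. Gam X i)"

text \<open>S^1 is modelled inside the monoid 'b option, None being an adjoined identity.
  If S already has an identity, S^1 = S (i.e. range Some); otherwise S^1 = S plus None.\<close>
fun omult :: "'b::semigroup_mult option \<Rightarrow> 'b option \<Rightarrow> 'b option" where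
  "omult None y = y"
| "omult (Some a) None = Some a"
| "omult (Some a) (Some b) = Some (a * b)"

definition has_identity :: "'b::semigroup_mult itself \<Rightarrow> bool" where
  "has_identity _ \<longleftrightarrow> (\<exists>e::'b. \<forall>s. e * s = s \<and> s * e = s)"

definition S1 :: "'b::semigroup_mult option set" where
  "S1 = (if has_identity TYPE('b) then range Some else UNIV)"

definition E1 :: "'b::semigroup_mult option set" where
  "E1 = {e \<in> S1. omult e e = e}"

definition ES :: "'b::semigroup_mult set" where
  "ES = {e. e * e = e}"

definition Sand :: "'b::semigroup_mult option \<Rightarrow> 'b option \<Rightarrow> 'b option set" where
  "Sand e f = {h \<in> E1. omult f h = h \<and> h = omult h e \<and> omult (omult e h) f = omult e f}"

definition skeleton_mapping :: "'a set \<Rightarrow> ('a gam \<Rightarrow> 'b::semigroup_mult option) \<Rightarrow> bool" where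
  "skeleton_mapping X \<phi> \<longleftrightarrow>
     (\<forall>g\<in>GamAll X. \<phi> g \<in> E1)
   \<and> inj_on (\<lambda>x. \<phi> (Gen x)) X
   \<and> (\<forall>x\<in>X. \<phi> (Gen x) \<in> Some ` ES)
   \<and> (\<forall>x\<in>X. omult (\<phi> One) (\<phi> (Gen x)) = \<phi> (Gen x) \<and> \<phi> (Gen x) = omult (\<phi> (Gen x)) (\<phi> One))
   \<and> (\<forall>i\<ge>2. \<forall>g\<in>Gam X i.
        \<phi> g \<in> Sand (omult (\<phi> (rgt g)) (\<phi> (cen g))) (omult (\<phi> (cen g)) (\<phi> (lft g))))"

definition extends :: "'a set \<Rightarrow> ('a gam \<Rightarrow> 'b option) \<Rightarrow> ('a \<Rightarrow> 'b) \<Rightarrow> bool" where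
  "extends X \<phi> \<phi>' \<longleftrightarrow> (\<forall>x\<in>X. \<phi> (Gen x) = Some (\<phi>' x))"

text \<open>The skeleton (Gamma(X) - {1})phi, viewed as a subset of S (all its elements lie in S).\<close>
definition skeleton_of :: "'a set \<Rightarrow> ('a gam \<Rightarrow> 'b option) \<Rightarrow> 'b set" where
  "skeleton_of X \<phi> = {s. Some s \<in> \<phi> ` (GamAll X - {One})}"

definition induces_unique_skeleton :: "'a set \<Rightarrow> ('a \<Rightarrow> 'b::semigroup_mult) \<Rightarrow> 'b set \<Rightarrow> bool" where
  "induces_unique_skeleton X \<phi>' A \<longleftrightarrow>
     (\<exists>\<phi>. skeleton_mapping X \<phi> \<and> extends X \<phi> \<phi>')
   \<and> (\<forall>\<phi>. skeleton_mapping X \<phi> \<and> extends X \<phi> \<phi>' \<longrightarrow> skeleton_of X \<phi> = A)"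

definition subsemigroup :: "'b::semigroup_mult set \<Rightarrow> bool" where
  "subsemigroup T \<longleftrightarrow> (\<forall>a\<in>T. \<forall>b\<in>T. a * b \<in> T)"

definition regular_set :: "'b::semigroup_mult set \<Rightarrow> bool" where
  "regular_set T \<longleftrightarrow> (\<forall>a\<in>T. \<exists>x\<in>T. a * x * a = a)"

definition generated :: "'b::semigroup_mult set \<Rightarrow> 'b set" where
  "generated A = \<Inter>{T. subsemigroup T \<and> A \<subseteq> T}"

end

theory Submission
  imports Defs
begin



lemma omult_assoc: "omult (omult a b) c = omult a (omult b c)"
  by (cases a; cases b; cases c) (auto simp: mult.assoc)

lemma omult_None_right[simp]: "omult a None = a"
  by (cases a) auto

fun depth :: "'a gam \<Rightarrow> nat" where
  "depth One = 0" | "depth (Gen x) = 1" | "depth (Tri l c r) = Suc (depth l)"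

lemma Gam_depth: "g \<in> Gam X i \<Longrightarrow> depth g = i"
proof (induction X i arbitrary: g rule: Gam.induct)
  case (3 X i)
  then show ?case by auto
qed auto

lemma GamAll_iff: "g \<in> GamAll X \<longleftrightarrow> g \<in> Gam X (depth g)"
  unfolding GamAll_def using Gam_depth by blast

lemma One_in[simp]: "One \<in> GamAll X"
  by (simp add: GamAll_iff)

lemma Gen_in[simp]: "Gen x \<in> GamAll X \<longleftrightarrow> x \<in> X"
  by (auto simp: GamAll_iff)

lemma Tri_in: "Tri l c r \<in> GamAll X \<longleftrightarrow> (\<exists>i. l \<in> Gam X (Suc i) \<and> c \<in> Gam X i \<and> r \<in> Gam X (Suc i) \<and> l \<noteq> r
        \<and> c \<in> {lft l, rgt l} \<inter> {lft r, rgt r})"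
  unfolding GamAll_def
  apply (rule iffI)
   apply clarify
  subgoal for i by (cases "(X,i)" rule: Gam.cases) auto
  apply clarify
  subgoal for i by (rule UN_I[of "Suc (Suc i)"]) auto
  done

definition ch :: "'a gam \<Rightarrow> 'a gam \<Rightarrow> bool" where
  "ch c g \<longleftrightarrow> g \<noteq> One \<and> (c = lft g \<or> c = rgt g)"

definition adj :: "'a gam \<Rightarrow> 'a gam \<Rightarrow> bool" where
  "adj u v \<longleftrightarrow> ch u v \<or> ch v u"

lemma ch_in: assumes "ch c g" "g \<in> GamAll X"
  shows "c \<in> GamAll X \<and> depth g = Suc (depth c)"
proof (cases g)
  case One then show ?thesis using assms by (simp add: ch_def)
next
  case (Gen x) then show ?thesis using assms by (auto simp: ch_def)
next
  case (Tri l c' r)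
  then obtain i where "l \<in> Gam X (Suc i)" "r \<in> Gam X (Suc i)" using assms Tri_in by blast
  then show ?thesis using assms Tri Gam_depth[of l X] Gam_depth[of r X]
    by (auto simp: ch_def GamAll_def)
qed

lemma Tri_cen: assumes "Tri l c r \<in> GamAll X"
  shows "c \<in> GamAll X \<and> ch c l \<and> ch c r \<and> ch l (Tri l c r) \<and> ch r (Tri l c r) \<and> l \<noteq> r
     \<and> l \<in> GamAll X \<and> r \<in> GamAll X"
proof -
  obtain i where h: "l \<in> Gam X (Suc i)" "c \<in> Gam X i" "r \<in> Gam X (Suc i)" "l \<noteq> r"
        "c \<in> {lft l, rgt l} \<inter> {lft r, rgt r}" using assms Tri_in by blast
  have "l \<noteq> One" "r \<noteq> One" using h Gam_depth[of l] Gam_depth[of r] by force+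
  then show ?thesis using h by (auto simp: ch_def GamAll_def)
qed

definition pp :: "('a gam \<Rightarrow> 'b::semigroup_mult option) \<Rightarrow> 'a gam list \<Rightarrow> 'b option" where
  "pp \<phi> P = foldr (\<lambda>g acc. omult (\<phi> g) acc) P None"

lemma pp_simps[simp]: "pp \<phi> [] = None" "pp \<phi> (g # P) = omult (\<phi> g) (pp \<phi> P)"
  by (simp_all add: pp_def)

lemma pp_append[simp]: "pp \<phi> (P @ Q) = omult (pp \<phi> P) (pp \<phi> Q)"
  by (induction P) (auto simp: omult_assoc)

fun vfree :: "'a gam list \<Rightarrow> bool" where
  "vfree (a # b # c # rest) = (\<not> (ch b a \<and> ch b c) \<and> vfree (b # c # rest))"
| "vfree _ = True"

lemma not_vfree: "\<not> vfree P \<Longrightarrow> \<exists>xs a b c ys. P = xs @ a # b # c # ys \<and> ch b a \<and> ch b c"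
proof (induction P rule: vfree.induct)
  case (1 a b c rest)
  show ?case
  proof (cases "ch b a \<and> ch b c")
    case True then show ?thesis by (metis append.left_neutral)
  next
    case False
    then obtain xs a' b' c' ys where "b # c # rest = xs @ a' # b' # c' # ys" "ch b' a'" "ch b' c'"
      using 1 by auto
    then show ?thesis by (metis append_Cons)
  qed
qed auto




lemma idem_l: "omult a a = a \<Longrightarrow> omult a (omult a b) = omult a b"
  by (metis omult_assoc)

lemma sand_K:
  assumes "h \<in> Sand (omult x y) (omult y z)" "omult y y = y"
  shows "omult (omult h x) h = h \<and> omult (omult h z) h = h"
proof -
  have hh: "omult h h = h" using assms(1) by (auto simp: Sand_def E1_def)
  have f: "omult (omult y z) h = h" and e: "h = omult h (omult x y)"
    and s: "omult (omult (omult x y) h) (omult y z) = omult (omult x y) (omult y z)"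
    using assms(1) by (auto simp: Sand_def)
  have ef: "omult (omult x y) (omult y z) = omult x (omult y z)"
    using idem_l[OF assms(2)] by (simp add: omult_assoc)
  have hef: "h = omult h (omult (omult x (omult y z)) h)"
  proof -
    have "h = omult (omult h h) h" using hh by simp
    also have "\<dots> = omult (omult (omult h (omult x y)) h) (omult (omult y z) h)" using e f by simp
    also have "\<dots> = omult h (omult (omult (omult (omult x y) h) (omult y z)) h)"
      by (simp add: omult_assoc)
    also have "\<dots> = omult h (omult (omult x (omult y z)) h)" using s ef by simp
    finally show ?thesis .
  qed
  have 1: "omult (omult h x) h = h"
  proof -
    have "omult (omult h x) h = omult (omult h x) (omult (omult y z) h)" using f by simp
    also have "\<dots> = h" using hef by (simp add: omult_assoc)
    finally show ?thesis .
  qed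
  have 2: "omult (omult h z) h = h"
  proof -
    have "omult (omult h z) h = omult (omult (omult h (omult x y)) z) h" using e by simp
    also have "\<dots> = h" using hef by (simp add: omult_assoc)
    finally show ?thesis .
  qed
  show ?thesis using 1 2 by simp
qed

locale skel =
  fixes X :: "'a set" and \<phi> :: "'a gam \<Rightarrow> 'b::semigroup_mult option"
  assumes sm: "skeleton_mapping X \<phi>"
begin

abbreviation "G \<equiv> GamAll X"

lemma idem: "g \<in> G \<Longrightarrow> omult (\<phi> g) (\<phi> g) = \<phi> g"
  using sm by (auto simp: skeleton_mapping_def E1_def)

lemma sandT: assumes "Tri l c r \<in> G"
  shows "\<phi> (Tri l c r) \<in> Sand (omult (\<phi> r) (\<phi> c)) (omult (\<phi> c) (\<phi> l))"
proof -
  have "Tri l c r \<in> Gam X (depth (Tri l c r))" using assms GamAll_iff by blast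
  moreover have "depth (Tri l c r) \<ge> 2" using Tri_cen[OF assms] ch_in[of l "Tri l c r" X] assms
    by (cases l) (auto simp: ch_def)
  ultimately show ?thesis using sm unfolding skeleton_mapping_def by fastforce
qed

lemma gen1: "x \<in> X \<Longrightarrow> omult (\<phi> One) (\<phi> (Gen x)) = \<phi> (Gen x) \<and> \<phi> (Gen x) = omult (\<phi> (Gen x)) (\<phi> One)"
  using sm by (auto simp: skeleton_mapping_def)

lemma K: assumes "ch d g" "g \<in> G"
  shows "omult (omult (\<phi> g) (\<phi> d)) (\<phi> g) = \<phi> g"
proof (cases g)
  case One then show ?thesis using assms by (simp add: ch_def)
next
  case (Gen x)
  then have "d = One" "x \<in> X" using assms by (auto simp: ch_def)
  then show ?thesis using gen1[of x] Gen idem[of g] assms(2) by (simp add: omult_assoc)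
next
  case (Tri l c r)
  have "c \<in> G" using Tri_cen assms Tri by blast
  then have "omult (omult (\<phi> g) (\<phi> r)) (\<phi> g) = \<phi> g \<and> omult (omult (\<phi> g) (\<phi> l)) (\<phi> g) = \<phi> g"
    using sand_K[OF sandT idem] assms Tri by blast
  then show ?thesis using assms Tri by (auto simp: ch_def)
qed

lemma notNone: "g \<in> G \<Longrightarrow> g \<noteq> One \<Longrightarrow> \<phi> g \<noteq> None"
proof (induction g)
  case (Gen x) then show ?case using sm by (auto simp: skeleton_mapping_def)
next
  case (Tri l c r)
  have "r \<in> G" "r \<noteq> One" using Tri_cen[OF Tri.prems(1)] by (auto simp: ch_def)
  then have "\<phi> r \<noteq> None" using Tri.IH by blast
  then obtain s where s: "\<phi> r = Some s" by auto
  show ?case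
  proof
    assume N: "\<phi> (Tri l c r) = None"
    have "\<phi> (Tri l c r) = omult (\<phi> (Tri l c r)) (omult (\<phi> r) (\<phi> c))"
      using sandT[OF Tri.prems(1)] by (auto simp: Sand_def)
    then show False using N s by (cases "\<phi> c") auto
  qed
qed auto

lemma flip: assumes "Tri l c r \<in> G"
  shows "omult (omult (\<phi> r) (\<phi> c)) (\<phi> l) = omult (omult (\<phi> r) (\<phi> (Tri l c r))) (\<phi> l)"
proof -
  let ?k = "\<phi> (Tri l c r)"
  have cG: "c \<in> G" using Tri_cen[OF assms] by blast
  have cc: "omult (\<phi> c) (\<phi> c) = \<phi> c" using idem[OF cG] .
  have f: "omult (omult (\<phi> c) (\<phi> l)) ?k = ?k" and e: "?k = omult ?k (omult (\<phi> r) (\<phi> c))"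
    and s: "omult (omult (omult (\<phi> r) (\<phi> c)) ?k) (omult (\<phi> c) (\<phi> l)) = omult (omult (\<phi> r) (\<phi> c)) (omult (\<phi> c) (\<phi> l))"
    using sandT[OF assms] by (auto simp: Sand_def)
  have ck: "omult (\<phi> c) ?k = ?k"
  proof -
    have "omult (\<phi> c) ?k = omult (\<phi> c) (omult (omult (\<phi> c) (\<phi> l)) ?k)" using f by simp
    also have "\<dots> = omult (omult (\<phi> c) (\<phi> l)) ?k" using idem_l[OF cc] by (simp only: omult_assoc)
    also have "\<dots> = ?k" using f by simp
    finally show ?thesis .
  qed
  have kc: "omult ?k (\<phi> c) = ?k"
  proof -
    have "omult ?k (\<phi> c) = omult (omult ?k (omult (\<phi> r) (\<phi> c))) (\<phi> c)" using e by simp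
    also have "\<dots> = omult ?k (omult (\<phi> r) (omult (\<phi> c) (\<phi> c)))" by (simp add: omult_assoc)
    also have "\<dots> = ?k" using e cc by (simp add: omult_assoc)
    finally show ?thesis .
  qed
  have "omult (omult (\<phi> r) (\<phi> c)) (\<phi> l) = omult (omult (\<phi> r) (\<phi> c)) (omult (\<phi> c) (\<phi> l))"
    using idem_l[OF cc] by (simp add: omult_assoc)
  also have "\<dots> = omult (omult (omult (\<phi> r) (\<phi> c)) ?k) (omult (\<phi> c) (\<phi> l))" using s by simp
  also have "\<dots> = omult (\<phi> r) (omult (omult (\<phi> c) ?k) (omult (\<phi> c) (\<phi> l)))" by (simp add: omult_assoc)
  also have "\<dots> = omult (\<phi> r) (omult (omult ?k (\<phi> c)) (\<phi> l))" using ck by (simp add: omult_assoc)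
  also have "\<dots> = omult (omult (\<phi> r) ?k) (\<phi> l)" using kc by (simp add: omult_assoc)
  finally show ?thesis .
qed

end



primrec dpath :: "'a gam \<Rightarrow> 'a gam list" where
  "dpath One = [One]"
| "dpath (Gen x) = [Gen x, One]"
| "dpath (Tri l c r) = Tri l c r # r # dpath c"

primrec upath :: "'a gam \<Rightarrow> 'a gam list" where
  "upath One = [One]"
| "upath (Gen x) = [One, Gen x]"
| "upath (Tri l c r) = upath c @ [l, Tri l c r]"

lemma dpath_ne[simp]: "dpath g \<noteq> []" by (cases g) auto
lemma upath_ne[simp]: "upath g \<noteq> []" by (cases g) auto
lemma hd_dpath[simp]: "hd (dpath g) = g" by (cases g) auto
lemma last_upath[simp]: "last (upath g) = g" by (cases g) auto
lemma last_dpath[simp]: "last (dpath g) = One" by (induction g) auto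
lemma hd_upath[simp]: "hd (upath g) = One" by (induction g) auto

context skel begin

definition pathok :: "'a gam list \<Rightarrow> bool" where
  "pathok P \<longleftrightarrow> set P \<subseteq> G \<and> successively adj P"

lemma dpath_ok: "g \<in> G \<Longrightarrow> pathok (dpath g) \<and> pp \<phi> (dpath g) = \<phi> g"
proof (induction g)
  case One then show ?case by (simp add: pathok_def)
next
  case (Gen x)
  then show ?case using gen1[of x] by (auto simp: pathok_def adj_def ch_def)
next
  case (Tri l c r)
  note tc = Tri_cen[OF Tri.prems]
  have IH: "pathok (dpath c) \<and> pp \<phi> (dpath c) = \<phi> c" using Tri.IH(2) tc by blast
  have ok: "pathok (dpath (Tri l c r))"
    using IH tc Tri.prems by (auto simp: pathok_def adj_def successively_Cons)
  have "omult (\<phi> (Tri l c r)) (omult (\<phi> r) (\<phi> c)) = \<phi> (Tri l c r)"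
    using sandT[OF Tri.prems] by (auto simp: Sand_def)
  then show ?case using ok IH by simp
qed

lemma upath_ok: "g \<in> G \<Longrightarrow> pathok (upath g) \<and> pp \<phi> (upath g) = \<phi> g"
proof (induction g)
  case One then show ?case by (simp add: pathok_def)
next
  case (Gen x)
  then show ?case using gen1[of x] by (auto simp: pathok_def adj_def ch_def)
next
  case (Tri l c r)
  note tc = Tri_cen[OF Tri.prems]
  have IH: "pathok (upath c) \<and> pp \<phi> (upath c) = \<phi> c" using Tri.IH(2) tc by blast
  have ok: "pathok (upath (Tri l c r))"
    using IH tc Tri.prems by (auto simp: pathok_def adj_def successively_append_iff)
  have "omult (omult (\<phi> c) (\<phi> l)) (\<phi> (Tri l c r)) = \<phi> (Tri l c r)"
    using sandT[OF Tri.prems] by (auto simp: Sand_def)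
  then show ?case using ok IH by (simp add: omult_assoc)
qed

lemma join:
  assumes "pathok xs" "pathok ys" "xs \<noteq> []" "ys \<noteq> []" "last xs = hd ys"
  shows "pathok (xs @ tl ys) \<and> pp \<phi> (xs @ tl ys) = omult (pp \<phi> xs) (pp \<phi> ys)
    \<and> hd (xs @ tl ys) = hd xs \<and> last (xs @ tl ys) = last ys"
proof -
  obtain w ys' where ys: "ys = w # ys'" using assms(4) by (cases ys) auto
  obtain xs0 where xs: "xs = xs0 @ [w]" using assms(3,5) ys
    by (metis append_butlast_last_id list.sel(1))
  have wG: "w \<in> G" using assms(2) ys by (auto simp: pathok_def)
  have "pathok (xs @ ys')" using assms(1,2) xs ys
    by (auto simp: pathok_def successively_append_iff successively_Cons)
  moreover have "pp \<phi> (xs @ ys') = omult (pp \<phi> xs) (pp \<phi> ys)"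
    using xs ys idem_l[OF idem[OF wG]] by (simp add: omult_assoc)
  moreover have "last (xs @ ys') = last ys" using xs ys by (cases ys') auto
  ultimately show ?thesis using ys assms(3) by simp
qed

lemma adj_depth: assumes "adj u v" "u \<in> G" "v \<in> G"
  shows "depth v \<le> Suc (depth u)"
  using assms ch_in[of u v X] ch_in[of v u X] by (auto simp: adj_def)

lemma depth_bound: "pathok P \<Longrightarrow> x \<in> set P \<Longrightarrow> depth x \<le> depth (hd P) + length P"
proof (induction P arbitrary: x rule: induct_list012)
  case (3 a b rest)
  have ok: "pathok (b # rest)" using "3.prems" by (auto simp: pathok_def)
  have "depth b \<le> Suc (depth a)" using adj_depth "3.prems" by (auto simp: pathok_def)
  then show ?case using "3.IH"(2)[OF ok, of x] "3.prems" by auto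
qed auto

definition dsum :: "'a gam list \<Rightarrow> nat" where "dsum P = sum_list (map depth P)"

lemma dsum_bound: "pathok P \<Longrightarrow> dsum P \<le> length P * (depth (hd P) + length P)"
proof -
  assume ok: "pathok P"
  have "dsum P \<le> sum_list (map (\<lambda>_. depth (hd P) + length P) P)"
    unfolding dsum_def by (rule sum_list_mono) (use depth_bound[OF ok] in auto)
  also have "\<dots> = length P * (depth (hd P) + length P)"
    by (simp add: sum_list_triv)
  finally show ?thesis .
qed

end



lemma vfree_Cons: "vfree (a # P) \<Longrightarrow> vfree P"
  by (cases P rule: vfree.cases) auto

context skel begin

lemma vfree_decomp: "pathok P \<Longrightarrow> vfree P \<Longrightarrow> P \<noteq> [] \<Longrightarrow>
  \<exists>U D. P = U @ D \<and> U \<noteq> [] \<and> successively (\<lambda>a b. ch a b) U \<and> successively (\<lambda>a b. ch b a) (last U # D)"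
proof (induction P rule: induct_list012)
  case (2 a) then show ?case by (intro exI[of _ "[a]"] exI[of _ "[]"]) auto
next
  case (3 a b rest)
  have ok: "pathok (b # rest)" using "3.prems" by (auto simp: pathok_def)
  obtain U' D' where UD: "b # rest = U' @ D'" "U' \<noteq> []" "successively (\<lambda>a b. ch a b) U'"
    "successively (\<lambda>a b. ch b a) (last U' # D')"
    using "3.IH"(2)[OF ok vfree_Cons[OF "3.prems"(2)]] by blast
  have hdU: "hd U' = b" using UD(1,2) by (cases U') auto
  have ab: "adj a b" using "3.prems"(1) by (simp add: pathok_def)
  show ?case
  proof (cases "ch a b")
    case True
    show ?thesis
      apply (rule exI[of _ "a # U'"], rule exI[of _ D'])
      using UD hdU True by (auto simp: successively_Cons)
  next
    case False
    then have ba: "ch b a" using ab by (simp add: adj_def)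
    have U1: "U' = [b]"
    proof (rule ccontr)
      assume "U' \<noteq> [b]"
      then obtain c U'' where U'': "U' = b # c # U''" using UD(2) hdU
        by (cases U') (auto simp: neq_Nil_conv)
      then have "ch b c" using UD(3) by simp
      moreover have "rest = c # U'' @ D'" using UD(1) U'' by simp
      ultimately show False using "3.prems"(2) ba by simp
    qed
    have D'r: "D' = rest" using UD(1) U1 by simp
    show ?thesis
      apply (rule exI[of _ "[a]"], rule exI[of _ "b # rest"])
      using UD U1 ba D'r by auto
  qed
qed auto

lemma desc_inv: "set L \<subseteq> G \<Longrightarrow> successively (\<lambda>a b. ch b a) L \<Longrightarrow> L \<noteq> [] \<Longrightarrow>
  omult (pp \<phi> L) (pp \<phi> (rev L)) = \<phi> (hd L)"
proof (induction L rule: induct_list012)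
  case (2 a) then show ?case using idem[of a] by simp
next
  case (3 a b rest)
  have IH: "omult (pp \<phi> (b # rest)) (pp \<phi> (rev (b # rest))) = \<phi> b"
    using "3.IH"(2) "3.prems" by simp
  have "omult (pp \<phi> (a # b # rest)) (pp \<phi> (rev (a # b # rest)))
      = omult (omult (\<phi> a) (omult (pp \<phi> (b # rest)) (pp \<phi> (rev (b # rest))))) (\<phi> a)"
    by (simp del: pp_simps add: omult_assoc) (simp add: omult_assoc)
  also have "\<dots> = \<phi> a" using IH K[of b a] "3.prems" by simp
  finally show ?case by simp
qed auto

lemma asc_inv: "set L \<subseteq> G \<Longrightarrow> successively (\<lambda>a b. ch a b) L \<Longrightarrow> L \<noteq> [] \<Longrightarrow>
  omult (pp \<phi> (rev L)) (pp \<phi> L) = \<phi> (last L)"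
  using desc_inv[of "rev L"] by (simp add: hd_rev)

lemma mountain: assumes "pathok P" "vfree P" "P \<noteq> []"
  shows "omult (omult (pp \<phi> P) (pp \<phi> (rev P))) (pp \<phi> P) = pp \<phi> P"
proof -
  obtain U D where UD: "P = U @ D" "U \<noteq> []" "successively (\<lambda>a b. ch a b) U"
    "successively (\<lambda>a b. ch b a) (last U # D)" using vfree_decomp[OF assms] by blast
  define p where "p = last U"
  have sG: "set P \<subseteq> G" using assms(1) by (simp add: pathok_def)
  have pG: "p \<in> G" using sG UD(1,2) p_def by auto
  have A1: "omult (pp \<phi> (rev U)) (pp \<phi> U) = \<phi> p"
    using asc_inv[of U] UD sG p_def by auto
  have A2: "omult (pp \<phi> (p # D)) (pp \<phi> (rev (p # D))) = \<phi> p"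
    using desc_inv[of "p # D"] UD sG p_def pG by auto
  have A3: "omult (pp \<phi> U) (\<phi> p) = pp \<phi> U"
  proof -
    have "U = butlast U @ [p]" using UD(2) p_def by simp
    then have "pp \<phi> U = omult (pp \<phi> (butlast U)) (\<phi> p)" by (metis pp_append pp_simps omult_None_right)
    then show ?thesis using idem[OF pG] by (simp add: omult_assoc)
  qed
  have A1': "\<And>z. omult (pp \<phi> (rev U)) (omult (pp \<phi> U) z) = omult (\<phi> p) z"
    using A1 by (metis omult_assoc)
  have A2': "\<And>z. omult (\<phi> p) (omult (pp \<phi> D) (omult (pp \<phi> (rev D)) (omult (\<phi> p) z))) = omult (\<phi> p) z"
    using A2 by (simp add: omult_assoc) (metis omult_assoc)
  have A3': "\<And>z. omult (pp \<phi> U) (omult (\<phi> p) z) = omult (pp \<phi> U) z"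
    using A3 by (metis omult_assoc)
  have "omult (omult (pp \<phi> P) (pp \<phi> (rev P))) (pp \<phi> P)
     = omult (pp \<phi> U) (omult (pp \<phi> D) (omult (pp \<phi> (rev D)) (omult (pp \<phi> (rev U)) (omult (pp \<phi> U) (pp \<phi> D)))))"
    using UD(1) by (simp add: omult_assoc)
  also have "\<dots> = omult (pp \<phi> U) (omult (pp \<phi> D) (omult (pp \<phi> (rev D)) (omult (\<phi> p) (pp \<phi> D))))"
    by (simp only: A1')
  also have "\<dots> = omult (pp \<phi> U) (omult (\<phi> p) (omult (pp \<phi> D) (omult (pp \<phi> (rev D)) (omult (\<phi> p) (pp \<phi> D)))))"
    by (simp only: A3')
  also have "\<dots> = omult (pp \<phi> U) (omult (\<phi> p) (pp \<phi> D))"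
    by (simp only: A2')
  also have "\<dots> = pp \<phi> P" using UD(1) by (simp only: A3' pp_append)
  finally show ?thesis .
qed

end



context skel begin

lemma K': "ch d g \<Longrightarrow> g \<in> G \<Longrightarrow> omult (\<phi> g) (omult (\<phi> d) (omult (\<phi> g) z)) = omult (\<phi> g) z"
  using K[of d g] by (metis omult_assoc)

lemma to_mountain: "pathok P \<Longrightarrow> P \<noteq> [] \<Longrightarrow>
  \<exists>M. pathok M \<and> vfree M \<and> M \<noteq> [] \<and> hd M = hd P \<and> last M = last P \<and> pp \<phi> M = pp \<phi> P"
proof (induction P rule: wf_induct[OF wf_measures[of "[length, \<lambda>P. length P * (depth (hd P) + length P) - dsum P]"]])
  case (1 P)
  show ?case
  proof (cases "vfree P")
    case True then show ?thesis using "1.prems" by blast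
  next
    case False
    then obtain xs a b c ys where P: "P = xs @ a # b # c # ys" and ba: "ch b a" and bc: "ch b c"
      using not_vfree by blast
    have sG: "set P \<subseteq> G" and sc: "successively adj P" using "1.prems" by (auto simp: pathok_def)
    have aG: "a \<in> G" and bG: "b \<in> G" and cG: "c \<in> G" using sG P by auto
    show ?thesis
    proof (cases "a = c")
      case True
      define P' where "P' = xs @ a # ys"
      have ok': "pathok P'" using sG sc P True unfolding P'_def pathok_def
        by (auto simp: successively_append_iff successively_Cons)
      have pp': "pp \<phi> P' = pp \<phi> P" using P True K'[OF ba aG] by (simp add: P'_def)
      have meas: "(P', P) \<in> measures [length, \<lambda>P. length P * (depth (hd P) + length P) - dsum P]"
        using P by (simp add: P'_def)
      have ne: "P' \<noteq> []" by (simp add: P'_def)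
      obtain M where M: "pathok M \<and> vfree M \<and> M \<noteq> [] \<and> hd M = hd P' \<and> last M = last P' \<and> pp \<phi> M = pp \<phi> P'"
        using "1.IH"[rule_format, OF meas ok' ne] by blast
      moreover have "hd P' = hd P" "last P' = last P" using P True by (auto simp: P'_def hd_append)
      ultimately show ?thesis using pp' by metis
    next
      case False
      define k where "k = Tri c b a"
      have dd: "depth a = Suc (depth b)" "depth c = Suc (depth b)"
        using ch_in[OF ba aG] ch_in[OF bc cG] by auto
      have kG: "k \<in> G" unfolding k_def Tri_in
        apply (rule exI[of _ "depth b"])
        using GamAll_iff[of a X] GamAll_iff[of b X] GamAll_iff[of c X] aG bG cG dd False ba bc
        by (auto simp: ch_def)
      have ak: "ch a k" and ck: "ch c k" by (auto simp: k_def ch_def)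
      define P' where "P' = xs @ a # k # c # ys"
      have ok': "pathok P'" using sG sc P kG ak ck unfolding P'_def pathok_def
        by (auto simp: successively_append_iff successively_Cons adj_def)
      have fl: "omult (\<phi> a) (omult (\<phi> b) (omult (\<phi> c) z)) = omult (\<phi> a) (omult (\<phi> k) (omult (\<phi> c) z))" for z
        using flip[of c b a] kG unfolding k_def by (metis omult_assoc)
      have pp': "pp \<phi> P' = pp \<phi> P" using P fl by (simp add: P'_def)
      have dk: "depth k = Suc (Suc (depth b))" using dd by (simp add: k_def)
      have ds: "dsum P' = dsum P + 2" using P dk dd by (simp add: P'_def dsum_def)
      have hd': "hd P' = hd P" "last P' = last P" using P by (auto simp: P'_def hd_append)
      have len: "length P' = length P" using P by (simp add: P'_def)
      have "dsum P' \<le> length P' * (depth (hd P') + length P')" using dsum_bound[OF ok'] .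
      then have meas: "(P', P) \<in> measures [length, \<lambda>P. length P * (depth (hd P) + length P) - dsum P]"
        using ds hd' len by simp
      have ne: "P' \<noteq> []" by (simp add: P'_def)
      obtain M where M: "pathok M \<and> vfree M \<and> M \<noteq> [] \<and> hd M = hd P' \<and> last M = last P' \<and> pp \<phi> M = pp \<phi> P'"
        using "1.IH"[rule_format, OF meas ok' ne] by blast
      then show ?thesis using pp' hd' by metis
    qed
  qed
qed

end



lemma generated_sub: "subsemigroup (generated B)"
  unfolding generated_def subsemigroup_def by blast

lemma generated_incl: "B \<subseteq> generated B"
  unfolding generated_def by blast

lemma generated_least: "subsemigroup T \<Longrightarrow> B \<subseteq> T \<Longrightarrow> generated B \<subseteq> T"
  unfolding generated_def by blast

lemma depth0: "depth g = 0 \<longleftrightarrow> g = One"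
  by (cases g) auto

context skel begin

abbreviation "Ask \<equiv> skeleton_of X \<phi>"

lemma phi_some: "g \<in> G \<Longrightarrow> g \<noteq> One \<Longrightarrow> \<exists>s \<in> Ask. \<phi> g = Some s"
  using notNone[of g] unfolding skeleton_of_def by force

lemma pp_in: "L \<noteq> [] \<Longrightarrow> set L \<subseteq> G - {One} \<Longrightarrow> \<exists>x \<in> generated Ask. pp \<phi> L = Some x"
proof (induction L)
  case (Cons g L)
  obtain s where s: "s \<in> Ask" "\<phi> g = Some s" using phi_some Cons.prems by auto
  have sg: "s \<in> generated Ask" using s generated_incl by blast
  show ?case
  proof (cases "L = []")
    case True then show ?thesis using s sg by simp
  next
    case False
    then obtain x where "x \<in> generated Ask" "pp \<phi> L = Some x" using Cons by auto
    then show ?thesis using s sg generated_sub by (auto simp: subsemigroup_def)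
  qed
qed simp

lemma up_depth: "set U \<subseteq> G \<Longrightarrow> successively (\<lambda>a b. ch a b) U \<Longrightarrow> x \<in> set U \<Longrightarrow> depth (hd U) \<le> depth x"
proof (induction U rule: induct_list012)
  case (3 a b rest)
  have "depth b = Suc (depth a)" using ch_in[of a b X] "3.prems" by auto
  then show ?case using "3.IH"(2) "3.prems" by auto
qed auto

lemma down_depth: "set L \<subseteq> G \<Longrightarrow> successively (\<lambda>a b. ch b a) L \<Longrightarrow> x \<in> set L \<Longrightarrow> depth (last L) \<le> depth x"
  using up_depth[of "rev L" x] by (simp add: hd_rev)

lemma no_One: assumes "pathok M" "vfree M" "M \<noteq> []" "hd M \<noteq> One" "last M \<noteq> One"
  shows "One \<notin> set M"
proof
  assume O: "One \<in> set M"
  obtain U D where UD: "M = U @ D" "U \<noteq> []" "successively (\<lambda>a b. ch a b) U"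
    "successively (\<lambda>a b. ch b a) (last U # D)" using vfree_decomp[OF assms(1-3)] by blast
  have sG: "set M \<subseteq> G" using assms(1) by (simp add: pathok_def)
  show False
  proof (cases "One \<in> set U")
    case True
    then have "depth (hd U) \<le> 0" using up_depth[OF _ UD(3), of One] sG UD(1) by auto
    then show False using assms(4) UD(1,2) depth0 by auto
  next
    case False
    then have "One \<in> set (last U # D)" using O UD(1) by auto
    moreover have "set (last U # D) \<subseteq> G" using sG UD(1,2) by auto
    ultimately have "depth (last (last U # D)) \<le> 0" using down_depth[OF _ UD(4), of One] by auto
    moreover have "last (last U # D) = last M" using UD(1,2) by (cases D) auto
    ultimately show False using assms(5) depth0 by auto
  qed
qed

lemma last_idem: "P \<noteq> [] \<Longrightarrow> set P \<subseteq> G \<Longrightarrow> omult (pp \<phi> P) (\<phi> (last P)) = pp \<phi> P"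
proof -
  assume a: "P \<noteq> []" "set P \<subseteq> G"
  then have "P = butlast P @ [last P]" by simp
  then have "pp \<phi> P = omult (pp \<phi> (butlast P)) (\<phi> (last P))" by (metis pp_append pp_simps omult_None_right)
  moreover have "last P \<in> G" using a by auto
  ultimately show ?thesis using idem[of "last P"] by (simp add: omult_assoc)
qed

lemma hd_idem: "P \<noteq> [] \<Longrightarrow> set P \<subseteq> G \<Longrightarrow> omult (\<phi> (hd P)) (pp \<phi> P) = pp \<phi> P"
  by (cases P) (auto simp: idem_l[OF idem])

definition PP :: "'b set" where
  "PP = {t. \<exists>P. pathok P \<and> P \<noteq> [] \<and> hd P \<noteq> One \<and> last P \<noteq> One \<and> pp \<phi> P = Some t}"

lemma Ask_PP: "Ask \<subseteq> PP"
proof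
  fix t assume "t \<in> Ask"
  then obtain g where g: "g \<in> G" "g \<noteq> One" "\<phi> g = Some t" unfolding skeleton_of_def by force
  then show "t \<in> PP" unfolding PP_def
    by (intro CollectI exI[of _ "[g]"]) (auto simp: pathok_def)
qed

lemma PP_sub: "subsemigroup PP"
  unfolding subsemigroup_def
proof (intro ballI)
  fix t1 t2 assume "t1 \<in> PP" "t2 \<in> PP"
  then obtain P Q where P: "pathok P" "P \<noteq> []" "hd P \<noteq> One" "last P \<noteq> One" "pp \<phi> P = Some t1"
    and Q: "pathok Q" "Q \<noteq> []" "hd Q \<noteq> One" "last Q \<noteq> One" "pp \<phi> Q = Some t2"
    unfolding PP_def by blast
  define u where "u = last P"
  define v where "v = hd Q"
  have uG: "u \<in> G" using P u_def by (auto simp: pathok_def)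
  have vG: "v \<in> G" using Q v_def by (auto simp: pathok_def)
  note du = dpath_ok[OF uG] and uv = upath_ok[OF vG]
  define R1 where "R1 = P @ tl (dpath u)"
  have j1: "last P = hd (dpath u)" using u_def by simp
  have R1: "pathok R1 \<and> pp \<phi> R1 = omult (pp \<phi> P) (pp \<phi> (dpath u)) \<and> hd R1 = hd P \<and> last R1 = last (dpath u)"
    unfolding R1_def by (rule join[OF P(1) conjunct1[OF du] P(2) dpath_ne j1])
  have R1': "pp \<phi> R1 = pp \<phi> P"
  proof -
    have "pp \<phi> R1 = omult (pp \<phi> P) (\<phi> u)" using R1 du by simp
    also have "\<dots> = pp \<phi> P" using last_idem[OF P(2)] P(1) u_def by (simp add: pathok_def)
    finally show ?thesis .
  qed
  define R2 where "R2 = upath v @ tl Q"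
  have j2: "last (upath v) = hd Q" using v_def by simp
  have R2: "pathok R2 \<and> pp \<phi> R2 = omult (pp \<phi> (upath v)) (pp \<phi> Q) \<and> hd R2 = hd (upath v) \<and> last R2 = last Q"
    unfolding R2_def by (rule join[OF conjunct1[OF uv] Q(1) upath_ne Q(2) j2])
  have R2': "pp \<phi> R2 = pp \<phi> Q"
  proof -
    have "pp \<phi> R2 = omult (\<phi> v) (pp \<phi> Q)" using R2 uv by simp
    also have "\<dots> = pp \<phi> Q" using hd_idem[OF Q(2)] Q(1) v_def by (simp add: pathok_def)
    finally show ?thesis .
  qed
  have ne: "R1 \<noteq> []" "R2 \<noteq> []" using P(2) unfolding R1_def R2_def by auto
  have j3: "last R1 = hd R2" using R1 R2 by simp
  define W where "W = R1 @ tl R2"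
  have W: "pathok W \<and> pp \<phi> W = omult (pp \<phi> R1) (pp \<phi> R2) \<and> hd W = hd R1 \<and> last W = last R2"
    unfolding W_def by (rule join[OF conjunct1[OF R1] conjunct1[OF R2] ne j3])
  have "W \<noteq> []" using ne W_def by simp
  moreover have "pp \<phi> W = Some (t1 * t2)" using W R1' R2' P(5) Q(5) by simp
  moreover have "hd W \<noteq> One" "last W \<noteq> One" using W R1 R2 P(3) Q(4) by auto
  ultimately show "t1 * t2 \<in> PP" unfolding PP_def using W by blast
qed

lemma regular_gen: "regular_set (generated Ask)"
  unfolding regular_set_def
proof
  fix a assume "a \<in> generated Ask"
  then have "a \<in> PP" using generated_least[OF PP_sub Ask_PP] by blast
  then obtain P where P: "pathok P" "P \<noteq> []" "hd P \<noteq> One" "last P \<noteq> One" "pp \<phi> P = Some a"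
    unfolding PP_def by blast
  obtain M where M: "pathok M" "vfree M" "M \<noteq> []" "hd M = hd P" "last M = last P" "pp \<phi> M = pp \<phi> P"
    using to_mountain[OF P(1,2)] by blast
  have "One \<notin> set M" using no_One[OF M(1-3)] M P by auto
  then have "set (rev M) \<subseteq> G - {One}" using M(1) by (auto simp: pathok_def)
  then obtain x where x: "x \<in> generated Ask" "pp \<phi> (rev M) = Some x" using pp_in[of "rev M"] M(3) by auto
  have "omult (omult (pp \<phi> M) (pp \<phi> (rev M))) (pp \<phi> M) = pp \<phi> M" using mountain[OF M(1-3)] .
  then have "a * x * a = a" using M(6) P(5) x by simp
  then show "\<exists>x\<in>generated Ask. a * x * a = a" using x by blast
qed

end



definition u1 :: "'b::semigroup_mult option" where
  "u1 = (if has_identity TYPE('b) then Some (SOME e. \<forall>s. e * s = s \<and> s * e = s) else None)"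

lemma Some_S1[simp]: "Some s \<in> S1"
  by (simp add: S1_def)

lemma u1_props: fixes s :: "'b::semigroup_mult"
  shows "(u1::'b option) \<in> S1" "omult u1 (Some s) = Some s" "omult (Some s) u1 = Some s"
proof -
  show "u1 \<in> S1" by (simp add: u1_def S1_def)
next
  have "omult u1 (Some s) = Some s \<and> omult (Some s) u1 = Some s" for s :: 'b
  proof (cases "has_identity TYPE('b)")
    case True
    then have "\<exists>e::'b. \<forall>s. e * s = s \<and> s * e = s" by (simp add: has_identity_def)
    then have "\<forall>s. (SOME e::'b. \<forall>s. e * s = s \<and> s * e = s) * s = s \<and> s * (SOME e::'b. \<forall>s. e * s = s \<and> s * e = s) = s"
      by (rule someI_ex)
    then show ?thesis using True by (simp add: u1_def)
  next
    case False then show ?thesis by (simp add: u1_def)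
  qed
  then show "omult u1 (Some s) = Some s" "omult (Some s) u1 = Some s" by auto
qed

lemma u1_idem: "omult (u1::'b::semigroup_mult option) u1 = u1"
proof (cases "u1::'b option")
  case None then show ?thesis by simp
next
  case (Some a) then show ?thesis using u1_props(2)[of a] by simp
qed

lemma sandwich_exists:
  fixes T :: "'b::semigroup_mult set"
  assumes sub: "subsemigroup T" and reg: "regular_set T" and ab: "a \<in> T" "b \<in> T"
    and idem: "a * a = a" "b * b = b"
  shows "\<exists>h\<in>T. Some h \<in> Sand (Some a) (Some b)"
proof -
  have y: "a * b \<in> T" using sub ab by (simp add: subsemigroup_def)
  then obtain x where x: "x \<in> T" "a * b * x * (a * b) = a * b" using reg by (auto simp: regular_set_def)
  define x' where "x' = x * (a * b) * x"
  define h where "h = b * x' * a"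
  have x'T: "x' \<in> T" using x y sub unfolding x'_def subsemigroup_def by blast
  have hT: "h \<in> T" using x'T ab sub unfolding h_def subsemigroup_def by blast
  have xz: "a * (b * (x * (a * (b * z)))) = a * (b * z)" for z
    using x(2) by (metis mult.assoc)
  have yx: "a * b * x' * (a * b) = a * b" using x unfolding x'_def by (simp add: mult.assoc xz)
  have x'y: "x' * (a * b) * x' = x'" unfolding x'_def by (simp add: mult.assoc xz)
  have hh: "h * h = h"
  proof -
    have "h * h = b * (x' * (a * b) * x') * a" unfolding h_def by (simp add: mult.assoc)
    then show ?thesis using x'y h_def by simp
  qed
  have bh: "b * h = h" unfolding h_def using idem by (simp add: mult.assoc[symmetric])
  have ha: "h * a = h" unfolding h_def using idem by (simp add: mult.assoc)
  have ahb: "a * h * b = a * b"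
  proof -
    have "a * h * b = a * b * x' * (a * b)" unfolding h_def by (simp add: mult.assoc)
    then show ?thesis using yx by simp
  qed
  show ?thesis using hT hh bh ha ahb by (auto simp: Sand_def E1_def)
qed

definition pick :: "'b::semigroup_mult set \<Rightarrow> 'b option \<Rightarrow> 'b option \<Rightarrow> 'b option" where
  "pick T e f = (SOME h. h \<in> Sand e f \<and> h \<in> Some ` T)"

primrec psi :: "('a \<Rightarrow> 'b::semigroup_mult) \<Rightarrow> 'b set \<Rightarrow> 'a gam \<Rightarrow> 'b option" where
  "psi p T One = u1"
| "psi p T (Gen x) = Some (p x)"
| "psi p T (Tri l c r) = pick T (omult (psi p T r) (psi p T c)) (omult (psi p T c) (psi p T l))"

lemma psi_inv:
  fixes T :: "'b::semigroup_mult set" and p :: "'a \<Rightarrow> 'b"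
  assumes sub: "subsemigroup T" and reg: "regular_set T" and pX: "p ` X \<subseteq> T" "p ` X \<subseteq> ES"
  shows "g \<in> GamAll X \<Longrightarrow> (g = One \<longrightarrow> psi p T g = u1)
     \<and> (g \<noteq> One \<longrightarrow> psi p T g \<in> Some ` T \<and> omult (psi p T g) (psi p T g) = psi p T g
          \<and> (\<forall>d. ch d g \<longrightarrow> omult (omult (psi p T g) (psi p T d)) (psi p T g) = psi p T g))
     \<and> (\<forall>l c r. g = Tri l c r \<longrightarrow> psi p T g \<in> Sand (omult (psi p T r) (psi p T c)) (omult (psi p T c) (psi p T l)))"
proof (induction g)
  case One then show ?case by simp
next
  case (Gen x)
  then have x: "x \<in> X" by simp
  then have "p x \<in> T" "p x * p x = p x" using pX by (auto simp: ES_def)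
  then show ?case by (auto simp: ch_def u1_props u1_idem)
next
  case (Tri l c r)
  note tc = Tri_cen[OF Tri.prems]
  have lO: "l \<noteq> One" "r \<noteq> One" using tc by (auto simp: ch_def)
  have IHl: "psi p T l \<in> Some ` T" "omult (psi p T l) (psi p T l) = psi p T l"
    "omult (omult (psi p T l) (psi p T c)) (psi p T l) = psi p T l"
    using Tri.IH(1) tc lO by auto
  have IHr: "psi p T r \<in> Some ` T" "omult (psi p T r) (psi p T r) = psi p T r"
    "omult (omult (psi p T r) (psi p T c)) (psi p T r) = psi p T r"
    using Tri.IH(3) tc lO by auto
  have IHc: "psi p T c = u1 \<or> psi p T c \<in> Some ` T" "omult (psi p T c) (psi p T c) = psi p T c"
    using Tri.IH(2) tc u1_props u1_idem by (cases "c = One"; auto)+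
  define e where "e = omult (psi p T r) (psi p T c)"
  define f where "f = omult (psi p T c) (psi p T l)"
  have eT: "e \<in> Some ` T"
    using IHr(1) IHc(1) sub unfolding e_def subsemigroup_def by (auto simp: u1_props u1_idem)
  have fT: "f \<in> Some ` T"
    using IHl(1) IHc(1) sub unfolding f_def subsemigroup_def by (auto simp: u1_props u1_idem)
  have ee: "omult e e = e" using IHr(3) unfolding e_def by (metis omult_assoc)
  have ff: "omult f f = f" using IHl(3) unfolding f_def by (metis omult_assoc)
  obtain a b where a: "e = Some a" "a \<in> T" and b: "f = Some b" "b \<in> T" using eT fT by auto
  have "\<exists>h\<in>T. Some h \<in> Sand e f"
    using sandwich_exists[OF sub reg a(2) b(2)] ee ff a b by simp
  then have "\<exists>h. h \<in> Sand e f \<and> h \<in> Some ` T" by blast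
  then have hk: "pick T e f \<in> Sand e f \<and> pick T e f \<in> Some ` T"
    unfolding pick_def by (rule someI_ex)
  have ps: "psi p T (Tri l c r) = pick T e f" by (simp add: e_def f_def)
  have KK: "omult (omult (pick T e f) (psi p T r)) (pick T e f) = pick T e f \<and>
            omult (omult (pick T e f) (psi p T l)) (pick T e f) = pick T e f"
    using sand_K[of "pick T e f" "psi p T r" "psi p T c" "psi p T l"] hk IHc(2) unfolding e_def f_def by blast
  have "omult (pick T e f) (pick T e f) = pick T e f" using hk by (auto simp: Sand_def E1_def)
  then show ?case using ps hk KK by (auto simp: ch_def e_def f_def)
qed

lemma psi_skel:
  fixes T :: "'b::semigroup_mult set" and p :: "'a \<Rightarrow> 'b"
  assumes sub: "subsemigroup T" and reg: "regular_set T" and pX: "p ` X \<subseteq> T" "p ` X \<subseteq> ES"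
    and inj: "inj_on p X"
  shows "skeleton_mapping X (psi p T) \<and> extends X (psi p T) p \<and> skeleton_of X (psi p T) \<subseteq> T"
proof -
  note I = psi_inv[OF sub reg pX]
  have E: "\<forall>g\<in>GamAll X. psi p T g \<in> E1"
  proof
    fix g assume g: "g \<in> GamAll X"
    show "psi p T g \<in> E1"
    proof (cases "g = One")
      case True then show ?thesis using I[OF g] u1_props u1_idem by (simp add: E1_def)
    next
      case False then show ?thesis using I[OF g] by (auto simp: E1_def)
    qed
  qed
  have inj2: "inj_on (\<lambda>x. psi p T (Gen x)) X" using inj by (simp add: inj_on_def)
  have es: "\<forall>x\<in>X. psi p T (Gen x) \<in> Some ` ES" using pX by auto
  have one: "\<forall>x\<in>X. omult (psi p T One) (psi p T (Gen x)) = psi p T (Gen x) \<and> psi p T (Gen x) = omult (psi p T (Gen x)) (psi p T One)"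
    by (simp add: u1_props u1_idem)
  have tri: "\<forall>i\<ge>2. \<forall>g\<in>Gam X i.
        psi p T g \<in> Sand (omult (psi p T (rgt g)) (psi p T (cen g))) (omult (psi p T (cen g)) (psi p T (lft g)))"
  proof (intro allI impI ballI)
    fix i g assume i: "2 \<le> i" and g: "g \<in> Gam X i"
    then obtain j where j: "i = Suc (Suc j)" by (metis add_2_eq_Suc le_Suc_ex)
    then obtain l c r where "g = Tri l c r" using g by auto
    moreover have "g \<in> GamAll X" using g GamAll_def by blast
    ultimately show "psi p T g \<in> Sand (omult (psi p T (rgt g)) (psi p T (cen g))) (omult (psi p T (cen g)) (psi p T (lft g)))"
      using I by auto
  qed
  have sm: "skeleton_mapping X (psi p T)"
    unfolding skeleton_mapping_def using E inj2 es one tri by blast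
  have ex: "extends X (psi p T) p" by (simp add: extends_def)
  have "skeleton_of X (psi p T) \<subseteq> T"
  proof
    fix s assume "s \<in> skeleton_of X (psi p T)"
    then obtain g where g: "g \<in> GamAll X" "g \<noteq> One" "Some s = psi p T g" unfolding skeleton_of_def by auto
    then show "s \<in> T" using I[OF g(1)] by force
  qed
  then show ?thesis using sm ex by blast
qed


theorem proposition5p6:
  fixes X :: "'a set" and \<phi>' :: "'a \<Rightarrow> 'b::semigroup_mult" and A :: "'b set"
  assumes "X \<noteq> {}"
    and "inj_on \<phi>' X"
    and "\<phi>' ` X \<subseteq> ES"
    and "induces_unique_skeleton X \<phi>' A"
  shows "subsemigroup (generated A) \<and> regular_set (generated A) \<and> \<phi>' ` X \<subseteq> generated A
     \<and> (\<forall>T. subsemigroup T \<and> regular_set T \<and> \<phi>' ` X \<subseteq> T \<longrightarrow> generated A \<subseteq> T)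
     \<and> (generated A = UNIV \<longrightarrow>
          regular_set (UNIV :: 'b set)
        \<and> (\<forall>T. subsemigroup T \<and> regular_set T \<and> \<phi>' ` X \<subseteq> T \<longrightarrow> T = UNIV))"
proof -
  obtain \<phi> where sm: "skeleton_mapping X \<phi>" and ex: "extends X \<phi> \<phi>'"
    using assms(4) unfolding induces_unique_skeleton_def by blast
  have uniq: "\<And>\<psi>. skeleton_mapping X \<psi> \<Longrightarrow> extends X \<psi> \<phi>' \<Longrightarrow> skeleton_of X \<psi> = A"
    using assms(4) unfolding induces_unique_skeleton_def by blast
  have A: "A = skeleton_of X \<phi>" using uniq[OF sm ex] by simp
  interpret skel X \<phi> by (rule skel.intro[OF sm])
  have s1: "subsemigroup (generated A)" by (rule generated_sub)
  have s2: "regular_set (generated A)" using regular_gen A by simp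
  have s3: "\<phi>' ` X \<subseteq> generated A"
  proof
    fix t assume "t \<in> \<phi>' ` X"
    then obtain x where x: "x \<in> X" "t = \<phi>' x" by auto
    then have "\<phi> (Gen x) = Some t" using ex by (simp add: extends_def)
    then have "t \<in> A" unfolding A skeleton_of_def using x
      by (intro CollectI image_eqI[of _ _ "Gen x"]) auto
    then show "t \<in> generated A" using generated_incl by blast
  qed
  have s4: "\<forall>T. subsemigroup T \<and> regular_set T \<and> \<phi>' ` X \<subseteq> T \<longrightarrow> generated A \<subseteq> T"
  proof (intro allI impI)
    fix T :: "'b set" assume T: "subsemigroup T \<and> regular_set T \<and> \<phi>' ` X \<subseteq> T"
    have ps: "skeleton_mapping X (psi \<phi>' T) \<and> extends X (psi \<phi>' T) \<phi>' \<and> skeleton_of X (psi \<phi>' T) \<subseteq> T"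
      using psi_skel[of T \<phi>' X] T assms(2,3) by blast
    then have "A \<subseteq> T" using uniq by blast
    then show "generated A \<subseteq> T" using generated_least T by blast
  qed
  have s5: "generated A = UNIV \<longrightarrow> regular_set (UNIV :: 'b set)
        \<and> (\<forall>T. subsemigroup T \<and> regular_set T \<and> \<phi>' ` X \<subseteq> T \<longrightarrow> T = UNIV)"
    using s2 s4 by (metis top.extremum_uniqueI)
  show ?thesis using s1 s2 s3 s4 s5 by blast
qed


end
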